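(* Assume $q \in U_0$ and, for each $i\in\{1,2\}$, $q\bmod n_i$ is a quadratic residue modulo $n_i$. Let $\omega_{(0,0,0)}$ denote the minimum odd-like weight of the cyclic code over $\mathrm{GF}(q)$ of length $n$ with generator polynomial $u_0(x)d_0^{(n_1)}(x)d_0^{(n_2)}(x)$. For $j\in\{1,2\}$ let $\omega_1^{(n/n_j)}$ denote the minimum odd-like weight of the cyclic code of length $n$ over $\mathrm{GF}(q)$ with generator polynomial $(x^n-1)/\big((x-1)d_1^{(n_j)}(x)\big)$. Then $$\omega_{(0,0,0)} \ge \sqrt{\max\big(\omega_1^{(n/n_1)},\ \omega_1^{(n/n_2)}\big)}.$$
   Context: Let $n_1,n_2$ be distinct odd primes, $n=n_1n_2$, and let $q$ be a prime power with $\gcd(q,n)=1$. Let $d=\gcd(n_1-1,n_2-1)$ and $e=(n_1-1)(n_2-1)/d$. Let $g_1,g_2$ be primitive roots modulo $n_1,n_2$ respectively, let $g$ be the integer modulo $n$ with $g\equiv g_1 \pmod{n_1}$, $g\equiv g_2\pmod{n_2}$, and let $\nu$ be the integer modulo $n$ with $\nu\equiv g\pmod{n_1}$, $\nu\equiv 1\pmod{n_2}$. It is known that every element of $\mathbb{Z}_n^*$ can be written uniquely as $g^s\nu^i$ with $0\le s\le e-1$, $0\le i\le d-1$. Define $U_0=\{g^s\nu^i: 0\le s\le e-1,\ 0\le i \le d-1,\ i \text{ even}\}$ and $U_1=\{g^s\nu^i: i \text{ odd}\}$ (same ranges). For $j\in\{1,2\}$ let $D_0^{(n_j)}$, $D_1^{(n_j)}$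 be the sets of quadratic residues and nonresidues modulo $n_j$. Let $N=\mathrm{ord}_n(q)$ and $\theta$ a primitive $n$-th root of unity in $\mathrm{GF}(q^N)$. Define $d_i^{(n_1)}(x)=\prod_{j\in D_i^{(n_1)}}(x-\theta^{n_2 j})$, $d_i^{(n_2)}(x)=\prod_{j\in D_i^{(n_2)}}(x-\theta^{n_1 j})$, and $u_j(x)=\prod_{i\in U_j}(x-\theta^i)$; under the hypotheses these lie in $\mathrm{GF}(q)[x]$. Cyclic codes of length $n$ are identified with ideals of $\mathrm{GF}(q)[x]/(x^n-1)$. A codeword $(c_0,\dots,c_{n-1})$ is odd-like if $\sum_i c_i\neq 0$; the minimum odd-like weight of a code is the minimum Hamming weight of its odd-like codewords. *)

theory Defs
  imports "HOL-Analysis.Analysis" "HOL-Number_Theory.Number_Theory"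
    "HOL-Computational_Algebra.Polynomial"
begin

text \<open>Hamming weight of a word (c_0,...,c_{n-1}), represented as a polynomial of degree < n.\<close>
definition hamming_weight :: "'a::zero poly \<Rightarrow> nat" where
  "hamming_weight c = card {i. Polynomial.coeff c i \<noteq> 0}"

definition odd_like :: "nat \<Rightarrow> 'a::comm_ring_1 poly \<Rightarrow> bool" where
  "odd_like n c \<longleftrightarrow> (\<Sum>i<n. Polynomial.coeff c i) \<noteq> 0"

text \<open>Cyclic code of length n with generator polynomial g: the ideal generated by g
  in F[x]/(x^n - 1), codewords represented by their reduced representatives (degree < n).\<close>
definition cyclic_code :: "nat \<Rightarrow> 'a::field poly \<Rightarrow> 'a poly set" where
  "cyclic_code n g = {(g * a) mod (Polynomial.monom 1 n - 1) | a. True}"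

definition min_odd_like_weight :: "nat \<Rightarrow> 'a::field poly set \<Rightarrow> nat" where
  "min_odd_like_weight n C = Min (hamming_weight ` {c \<in> C. odd_like n c})"

definition QR_set :: "nat \<Rightarrow> nat set" where
  "QR_set p = {j. 0 < j \<and> j < p \<and> QuadRes (int p) (int j)}"

definition QNR_set :: "nat \<Rightarrow> nat set" where
  "QNR_set p = {j. 0 < j \<and> j < p \<and> \<not> QuadRes (int p) (int j)}"

text \<open>The sets U_0, U_1 (elements g^s nu^i reduced mod n).\<close>
definition U_set :: "nat \<Rightarrow> nat \<Rightarrow> nat \<Rightarrow> nat \<Rightarrow> nat \<Rightarrow> nat \<Rightarrow> nat set" where
  "U_set r n e d g \<nu> = {(g ^ s * \<nu> ^ i) mod n | s i. s < e \<and> i < d \<and> i mod 2 = r}"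

definition root_poly :: "'b::comm_ring_1 \<Rightarrow> nat set \<Rightarrow> 'b poly" where
  "root_poly t S = (\<Prod>j\<in>S. [:- (t ^ j), 1:])"

end

theory Submission
  imports Defs
begin

hide_const (open) up_ring.coeff up_ring.monom


locale fhom =
  fixes \<phi> :: "'a::field \<Rightarrow> 'b::field"
  assumes hadd: "\<And>x y. \<phi> (x + y) = \<phi> x + \<phi> y"
    and hmult: "\<And>x y. \<phi> (x * y) = \<phi> x * \<phi> y"
    and hone: "\<phi> 1 = 1"
begin

lemma hzero[simp]: "\<phi> 0 = 0"
  using hadd[of 0 0] by (metis add_cancel_right_right)

lemma hneg: "\<phi> (- x) = - \<phi> x"
  using hadd[of x "-x"] by (simp add: eq_neg_iff_add_eq_0 add.commute)

lemma hdiff: "\<phi> (x - y) = \<phi> x - \<phi> y"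
  using hadd[of x "-y"] hneg[of y] by simp

lemma hsum: "\<phi> (sum f A) = sum (\<lambda>x. \<phi> (f x)) A"
  by (induction A rule: infinite_finite_induct) (auto simp: hadd)

lemma heq0[simp]: "\<phi> x = 0 \<longleftrightarrow> x = 0"
proof
  assume "\<phi> x = 0"
  show "x = 0"
  proof (rule ccontr)
    assume "x \<noteq> 0"
    hence "\<phi> (x * inverse x) = 1" using hone by simp
    thus False using \<open>\<phi> x = 0\<close> by (simp add: hmult)
  qed
qed simp

lemma mp_coeff[simp]: "coeff (map_poly \<phi> p) i = \<phi> (coeff p i)"
  by (simp add: coeff_map_poly)

lemma mp_add: "map_poly \<phi> (p + q) = map_poly \<phi> p + map_poly \<phi> q"
  by (rule poly_eqI) (simp add: hadd)

lemma mp_diff: "map_poly \<phi> (p - q) = map_poly \<phi> p - map_poly \<phi> q"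
  by (rule poly_eqI) (simp add: hdiff)

lemma mp_mult: "map_poly \<phi> (p * q) = map_poly \<phi> p * map_poly \<phi> q"
  by (rule poly_eqI) (simp add: coeff_mult hsum hmult)

lemma mp_monom: "map_poly \<phi> (monom c k) = monom (\<phi> c) k"
  by (simp add: map_poly_monom)

lemma mp_one: "map_poly \<phi> 1 = 1"
  by (simp add: hone)

lemma mp_sum: "map_poly \<phi> (sum f A) = sum (\<lambda>x. map_poly \<phi> (f x)) A"
  by (induction A rule: infinite_finite_induct) (auto simp: mp_add)

lemma mp_degree: "degree (map_poly \<phi> p) = degree p"
  by (rule degree_map_poly) simp

lemma mp_eq0: "map_poly \<phi> p = 0 \<longleftrightarrow> p = 0"
  by (metis leading_coeff_0_iff mp_coeff mp_degree heq0)

lemma poly_mp: "poly (map_poly \<phi> p) (\<phi> x) = \<phi> (poly p x)"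
  by (induction p) (auto simp: map_poly_pCons hadd hmult)

lemma descent:
  assumes "map_poly \<phi> h dvd map_poly \<phi> p"
  shows "h dvd p"
proof (cases "h = 0")
  case True
  then show ?thesis using assms by (simp add: mp_eq0)
next
  case False
  define r where "r = p mod h"
  have pe: "p = p div h * h + r" unfolding r_def by simp
  have "map_poly \<phi> r = map_poly \<phi> p - map_poly \<phi> (p div h) * map_poly \<phi> h"
  proof -
    have "map_poly \<phi> p = map_poly \<phi> (p div h) * map_poly \<phi> h + map_poly \<phi> r"
      using arg_cong[OF pe, of "map_poly \<phi>"] by (simp add: mp_add mp_mult)
    thus ?thesis by simp
  qed
  hence dv: "map_poly \<phi> h dvd map_poly \<phi> r" using assms by simp
  have "r = 0"
  proof (rule ccontr)
    assume "r \<noteq> 0"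
    hence "degree r < degree h" using degree_mod_less[OF False, of p] r_def by auto
    moreover have "degree h \<le> degree r"
      using dvd_imp_degree_le[OF dv] \<open>r \<noteq> 0\<close> by (simp add: mp_degree mp_eq0)
    ultimately show False by simp
  qed
  thus ?thesis unfolding r_def by (simp add: mod_eq_0_iff_dvd)
qed

end


lemma prod_linear_dvd:
  fixes p :: "'b::field poly"
  assumes "finite S" "\<And>x. x \<in> S \<Longrightarrow> poly p x = 0"
  shows "(\<Prod>x\<in>S. [:-x,1:]) dvd p"
  using assms
proof (induction S arbitrary: p rule: finite_induct)
  case empty
  then show ?case by simp
next
  case (insert x S)
  from insert have "(\<Prod>x\<in>S. [:-x,1:]) dvd p" by auto
  then obtain r where r: "p = (\<Prod>x\<in>S. [:-x,1:]) * r" by (auto elim: dvdE)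
  have "poly p x = 0" using insert by auto
  hence "(\<Prod>y\<in>S. x - y) * poly r x = 0" using r by (simp add: poly_prod)
  moreover have "(\<Prod>y\<in>S. x - y) \<noteq> 0" using insert(1,2) by (auto simp: prod_zero_iff)
  ultimately have "poly r x = 0" by simp
  then obtain r' where "r = [:-x,1:] * r'" using poly_eq_0_iff_dvd by (metis dvdE)
  hence "p = ([:-x,1:] * (\<Prod>x\<in>S. [:-x,1:])) * r'" using r by (metis mult.assoc mult.commute)
  thus ?case using insert(1,2) by simp
qed

locale rootn =
  fixes \<theta> :: "'b::field" and n :: nat
  assumes npos: "0 < n" and thn: "\<theta> ^ n = 1" and prim: "\<And>k. 0 < k \<Longrightarrow> k < n \<Longrightarrow> \<theta> ^ k \<noteq> 1"
begin

lemma th_nz: "\<theta> \<noteq> 0"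
  using thn npos by (metis power_0_left zero_neq_one gr_implies_not0)

lemma pow_mod: "\<theta> ^ (k mod n) = \<theta> ^ k"
proof -
  have "\<theta> ^ k = \<theta> ^ (n * (k div n) + k mod n)" by (simp only: mult_div_mod_eq)
  also have "\<dots> = \<theta> ^ (k mod n)" by (simp only: power_add power_mult thn power_one mult_1_left)
  finally show ?thesis by simp
qed

lemma pow_inj: "inj_on (\<lambda>k. \<theta> ^ k) {..<n}"
proof (rule inj_onI)
  have aux: "i < j \<Longrightarrow> j < n \<Longrightarrow> \<theta> ^ i \<noteq> \<theta> ^ j" for i j
  proof
    assume "i < j" "j < n" "\<theta> ^ i = \<theta> ^ j"
    hence "\<theta> ^ i * \<theta> ^ (j - i) = \<theta> ^ i * 1"
      by (metis le_add_diff_inverse less_imp_le power_add mult_1_right)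
    hence "\<theta> ^ (j - i) = 1" using th_nz by simp
    thus False using prim[of "j - i"] \<open>i < j\<close> \<open>j < n\<close> by simp
  qed
  fix i j assume "i \<in> {..<n}" "j \<in> {..<n}" "\<theta> ^ i = \<theta> ^ j"
  thus "i = j" using aux[of i j] aux[of j i] by (cases i j rule: linorder_cases) auto
qed

lemma prod_dvd:
  fixes p :: "'b poly"
  assumes "K \<subseteq> {..<n}" "\<And>k. k \<in> K \<Longrightarrow> poly p (\<theta> ^ k) = 0"
  shows "(\<Prod>k\<in>K. [:-(\<theta>^k),1:]) dvd p"
proof -
  have inj: "inj_on (\<lambda>k. \<theta> ^ k) K" using pow_inj assms(1) by (rule inj_on_subset)
  have fin: "finite K" using assms(1) finite_subset by blast
  have "(\<Prod>x\<in>(\<lambda>k. \<theta> ^ k) ` K. [:-x,1:]) dvd p"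
    using assms by (intro prod_linear_dvd) (auto simp: fin)
  thus ?thesis by (simp add: prod.reindex[OF inj])
qed

lemma xn_factor: "(monom 1 n - 1 :: 'b poly) = (\<Prod>k<n. [:-(\<theta>^k),1:])"
proof -
  let ?P = "(\<Prod>k<n. [:-(\<theta>^k),1:])"
  let ?M = "(monom 1 n - 1 :: 'b poly)"
  have "?P dvd ?M"
    by (rule prod_dvd) (auto simp: poly_monom, metis mult.commute power_mult power_one thn)
  then obtain r where r: "?M = ?P * r" by (elim dvdE)
  have degP: "degree ?P = n" by (subst degree_prod_eq_sum_degree) auto
  have lcP: "lead_coeff ?P = 1" by (simp add: lead_coeff_prod)
  have cM: "coeff ?M n = 1" using npos by (simp add: coeff_monom)
  have degMle: "degree ?M \<le> n" by (rule degree_le) (auto simp: coeff_monom)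
  have degM: "degree ?M = n" using degMle cM by (metis le_degree le_antisym one_neq_zero)
  have Mnz: "?M \<noteq> 0" using cM by (metis coeff_0 one_neq_zero)
  hence rnz: "r \<noteq> 0" using r by auto
  have "degree ?M = degree ?P + degree r" using r rnz
    by (metis degree_mult_eq lcP leading_coeff_0_iff one_neq_zero)
  hence "degree r = 0" using degM degP by simp
  then obtain c where c: "r = [:c:]" by (metis degree_eq_zeroE)
  have "lead_coeff ?M = lead_coeff ?P * lead_coeff r" using r by (simp add: lead_coeff_mult)
  hence "c = 1" using c lcP degM cM by simp
  thus ?thesis using r c by simp
qed

lemma H_factor:
  fixes r p :: nat and S :: "nat set"
  assumes "n = r * p" "S \<subseteq> {0<..<p}"
  shows "(monom 1 n - 1 :: 'b poly) div ([:-1,1:] * root_poly (\<theta> ^ r) S)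
         = (\<Prod>k\<in>{..<n} - insert 0 ((\<lambda>j. r*j) ` S). [:-(\<theta>^k),1:])"
proof -
  let ?L = "\<lambda>k. [:-(\<theta>^k),1:]"
  let ?E = "insert 0 ((\<lambda>j. r*j) ` S)"
  have rpos: "r > 0" using npos assms(1) by auto
  have finS: "finite S" using assms(2) finite_subset by blast
  have Esub: "?E \<subseteq> {..<n}" using assms npos by auto
  have "(\<Prod>k<n. ?L k) = (\<Prod>k\<in>{..<n} - ?E. ?L k) * (\<Prod>k\<in>?E. ?L k)"
    by (rule prod.subset_diff[OF Esub]) simp
  moreover have "(\<Prod>k\<in>?E. ?L k) = [:-1,1:] * root_poly (\<theta> ^ r) S"
  proof -
    have "0 \<notin> (\<lambda>j. r*j) ` S" using assms(2) rpos by auto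
    hence "(\<Prod>k\<in>?E. ?L k) = ?L 0 * (\<Prod>k\<in>(\<lambda>j. r*j) ` S. ?L k)" using finS by simp
    also have "(\<Prod>k\<in>(\<lambda>j. r*j) ` S. ?L k) = (\<Prod>j\<in>S. ?L (r*j))"
      using rpos by (subst prod.reindex) (auto simp: inj_on_def)
    also have "\<dots> = root_poly (\<theta> ^ r) S" by (simp add: root_poly_def power_mult)
    finally show ?thesis by simp
  qed
  moreover have "[:-1,1:] * root_poly (\<theta> ^ r) S \<noteq> (0::'b poly)"
  proof -
    have "root_poly (\<theta> ^ r) S \<noteq> 0" by (simp add: root_poly_def finS)
    moreover have "[:-1,1:] \<noteq> (0::'b poly)" by simp
    ultimately show ?thesis by (metis mult_eq_0_iff)
  qed
  ultimately show ?thesis by (simp add: xn_factor)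
qed

end


definition sig :: "nat \<Rightarrow> nat \<Rightarrow> 'a::comm_ring_1 poly \<Rightarrow> 'a poly" where
  "sig \<mu> n c = (\<Sum>i<n. monom (coeff c i) (\<mu> * i mod n))"

lemma degM: "0 < n \<Longrightarrow> degree (monom 1 n - 1 :: 'a::field poly) = n"
proof -
  assume np: "0 < n"
  have cM: "coeff (monom 1 n - 1 :: 'a poly) n = 1" using np by (simp add: coeff_monom)
  have "degree (monom 1 n - 1 :: 'a poly) \<le> n" by (rule degree_le) (auto simp: coeff_monom)
  thus ?thesis using cM by (metis le_degree le_antisym one_neq_zero)
qed

lemma M_nz: "0 < n \<Longrightarrow> (monom 1 n - 1 :: 'a::field poly) \<noteq> 0"
  using degM[of n] by (metis degree_0 less_numeral_extra(3))

lemma deg_mod_M: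
  fixes p :: "'a::field poly"
  assumes "0 < n" shows "degree (p mod (monom 1 n - 1)) < n"
proof (cases "p mod (monom 1 n - 1) = 0")
  case True thus ?thesis using assms by simp
next
  case False
  hence "degree (p mod (monom 1 n - 1)) < degree (monom 1 n - 1 :: 'a poly)"
    using degree_mod_less[OF M_nz[OF assms], of p] by simp
  thus ?thesis using degM[OF assms, where 'a='a] by linarith
qed

lemma code_deg:
  fixes c :: "'a::field poly"
  assumes "0 < n" "c \<in> cyclic_code n G" shows "degree c < n"
  using assms deg_mod_M by (auto simp: cyclic_code_def)

lemma coeff_ge: "degree p < n \<Longrightarrow> n \<le> i \<Longrightarrow> coeff p i = 0"
  by (simp add: coeff_eq_0)

lemma poly_sum_lt:
  fixes p :: "'a::comm_ring_1 poly"
  assumes "degree p < n" shows "poly p x = (\<Sum>i<n. coeff p i * x ^ i)"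
proof -
  have "poly p x = (\<Sum>i\<le>degree p. coeff p i * x ^ i)" by (rule poly_altdef)
  also have "\<dots> = (\<Sum>i<n. coeff p i * x ^ i)"
    by (rule sum.mono_neutral_left) (use assms in \<open>auto simp: coeff_eq_0\<close>)
  finally show ?thesis .
qed

lemma sum_coeff_poly1: "degree (p::'a::comm_ring_1 poly) < n \<Longrightarrow> (\<Sum>i<n. coeff p i) = poly p 1"
  by (simp add: poly_sum_lt)

lemma poly_mod_M:
  fixes p :: "'a::field poly"
  assumes "x ^ n = 1" shows "poly (p mod (monom 1 n - 1)) x = poly p x"
proof -
  let ?M = "monom 1 n - 1 :: 'a poly"
  have "poly p x = poly (p div ?M) x * poly ?M x + poly (p mod ?M) x"
    by (metis div_mult_mod_eq poly_add poly_mult)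
  moreover have "poly ?M x = 0" using assms by (simp add: poly_monom)
  ultimately show ?thesis by simp
qed

lemma monom_mod_M:
  fixes a :: "'a::field"
  assumes "0 < n" shows "monom a k mod (monom 1 n - 1) = monom a (k mod n)"
proof -
  let ?M = "monom 1 n - 1 :: 'a poly"
  obtain t where t: "k = k mod n + n * t" by (metis mod_mult_div_eq add.commute)
  have dv: "?M dvd monom 1 (n * t) - 1"
  proof -
    have "(monom 1 n :: 'a poly) ^ t - 1 = (monom 1 n - 1) * (\<Sum>i<t. monom 1 n ^ i)"
      by (rule power_diff_1_eq)
    moreover have "(monom 1 n :: 'a poly) ^ t = monom 1 (n * t)" by (simp add: monom_power mult.commute)
    ultimately show ?thesis by (metis dvdI)
  qed
  have e1: "monom a (k mod n) * monom 1 (n*t) = monom a k"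
    using t[symmetric] by (simp add: mult_monom)
  have "monom a k = monom a (k mod n) + monom a (k mod n) * (monom 1 (n * t) - 1)"
    unfolding right_diff_distrib e1 by simp
  moreover obtain s where "monom 1 (n * t) - 1 = ?M * s" using dv by (elim dvdE)
  ultimately have "monom a k = monom a (k mod n) + (monom a (k mod n) * s) * ?M" by (simp only: ac_simps)
  hence "monom a k mod ?M = monom a (k mod n) mod ?M" by (metis mod_mult_self1)
  also have "\<dots> = monom a (k mod n)"
  proof (cases "a = 0")
    case True thus ?thesis by simp
  next
    case False
    thus ?thesis using degM[OF assms, where 'a='a] assms by (intro mod_poly_less) (simp add: degree_monom_eq)
  qed
  finally show ?thesis .
qed

lemma modM_sum:
  fixes p :: "'a::field poly"
  assumes "0 < n"
  shows "p mod (monom 1 n - 1) = (\<Sum>k\<le>degree p. monom (coeff p k) (k mod n))"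
proof -
  let ?M = "monom 1 n - 1 :: 'a poly"
  let ?R = "(\<Sum>k\<le>degree p. monom (coeff p k) (k mod n))"
  have "p mod ?M = (\<Sum>k\<le>degree p. monom (coeff p k) k) mod ?M" by (simp add: poly_as_sum_of_monoms)
  also have "\<dots> = (\<Sum>k\<le>degree p. monom (coeff p k) k mod ?M) mod ?M" by (simp add: mod_sum_eq)
  also have "\<dots> = ?R mod ?M" by (simp add: monom_mod_M assms)
  also have "\<dots> = ?R"
  proof (cases "?R = 0")
    case True thus ?thesis by simp
  next
    case False
    have md: "\<not> n - Suc 0 < x mod n" for x using mod_less_divisor[OF assms, of x] by linarith
    have "degree ?R \<le> n - 1"
      by (rule degree_le) (use assms md in \<open>auto simp: coeff_sum coeff_monom intro!: sum.neutral\<close>)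
    hence "degree ?R < degree ?M" using degM[OF assms, where 'a='a] assms by linarith
    thus ?thesis by (rule mod_poly_less)
  qed
  finally show ?thesis .
qed



lemma sum_if_nz:
  assumes "(\<Sum>a\<in>A. if P a then f a else 0) \<noteq> (0::'b::comm_monoid_add)"
  shows "\<exists>a\<in>A. P a \<and> f a \<noteq> 0"
proof (rule ccontr)
  assume "\<not> ?thesis"
  hence "\<forall>a\<in>A. (if P a then f a else 0) = 0" by auto
  hence "(\<Sum>a\<in>A. if P a then f a else 0) = 0" by (rule sum.neutral)
  thus False using assms by simp
qed

lemma supp_modM:
  fixes p :: "'a::field poly"
  assumes "0 < n" "coeff (p mod (monom 1 n - 1)) j \<noteq> 0"
  shows "\<exists>k. coeff p k \<noteq> 0 \<and> j = k mod n"
proof -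
  have "(\<Sum>k\<le>degree p. if k mod n = j then coeff p k else 0) \<noteq> 0"
    using assms by (simp add: modM_sum coeff_sum coeff_monom)
  thus ?thesis using sum_if_nz by fastforce
qed

lemma supp_mult:
  assumes "coeff (p * q) k \<noteq> (0::'a::comm_semiring_0)"
  shows "\<exists>i j. coeff p i \<noteq> 0 \<and> coeff q j \<noteq> 0 \<and> k = i + j"
proof -
  have s: "(\<Sum>i\<le>k. coeff p i * coeff q (k - i)) \<noteq> 0" using assms by (simp add: coeff_mult)
  have "\<exists>i\<in>{..k}. coeff p i * coeff q (k - i) \<noteq> 0"
  proof (rule ccontr)
    assume "\<not> ?thesis"
    hence "(\<Sum>i\<le>k. coeff p i * coeff q (k - i)) = 0" by (intro sum.neutral) auto
    thus False using s by simp
  qed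
  then obtain i where "i \<le> k" "coeff p i * coeff q (k - i) \<noteq> 0" by auto
  thus ?thesis by (intro exI[of _ i] exI[of _ "k - i"]) auto
qed

lemma supp_sig:
  assumes "coeff (sig \<mu> n c) j \<noteq> 0"
  shows "\<exists>i. coeff c i \<noteq> 0 \<and> j = \<mu> * i mod n"
proof -
  have "(\<Sum>i<n. if \<mu> * i mod n = j then coeff c i else 0) \<noteq> 0"
    using assms by (simp add: sig_def coeff_sum coeff_monom)
  thus ?thesis using sum_if_nz by fastforce
qed

definition supp :: "'a::zero poly \<Rightarrow> nat set" where "supp p = {i. coeff p i \<noteq> 0}"

lemma supp_finite: "finite (supp p)"
proof -
  have "supp p \<subseteq> {..degree p}" by (auto simp: supp_def intro: le_degree)
  thus ?thesis by (rule finite_subset) simp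
qed

lemma hw_supp: "hamming_weight p = card (supp p)"
  by (simp add: hamming_weight_def supp_def)

lemma weight_bound:
  fixes c :: "'a::field poly"
  assumes "0 < n"
  shows "hamming_weight ((c * sig \<mu> n c) mod (monom 1 n - 1)) \<le> hamming_weight c * hamming_weight c"
proof -
  let ?s = "sig \<mu> n c"
  have s1: "supp ?s \<subseteq> (\<lambda>i. \<mu> * i mod n) ` supp c"
    using supp_sig by (fastforce simp: supp_def)
  have s2: "supp ((c * ?s) mod (monom 1 n - 1)) \<subseteq> (\<lambda>(i,j). (i + j) mod n) ` (supp c \<times> supp ?s)"
  proof
    fix x assume "x \<in> supp ((c * ?s) mod (monom 1 n - 1))"
    then obtain k where k: "coeff (c * ?s) k \<noteq> 0" "x = k mod n"
      using supp_modM[OF assms] by (auto simp: supp_def)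
    then obtain i j where "coeff c i \<noteq> 0" "coeff ?s j \<noteq> 0" "k = i + j" using supp_mult by blast
    thus "x \<in> (\<lambda>(i,j). (i + j) mod n) ` (supp c \<times> supp ?s)"
      using k by (auto simp: supp_def image_iff)
  qed
  have "card (supp ((c * ?s) mod (monom 1 n - 1))) \<le> card ((\<lambda>(i,j). (i + j) mod n) ` (supp c \<times> supp ?s))"
    by (rule card_mono[OF _ s2]) (auto simp: supp_finite)
  also have "\<dots> \<le> card (supp c \<times> supp ?s)" by (rule card_image_le) (auto simp: supp_finite)
  also have "\<dots> = card (supp c) * card (supp ?s)" by (simp add: card_cartesian_product)
  also have "card (supp ?s) \<le> card (supp c)"
    using card_mono[OF _ s1] card_image_le[of "supp c" "\<lambda>i. \<mu> * i mod n"] by (simp add: supp_finite)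
  hence "card (supp c) * card (supp ?s) \<le> card (supp c) * card (supp c)" by simp
  finally show ?thesis by (simp add: hw_supp)
qed

lemma poly_sig1: "poly (sig \<mu> n c) 1 = (\<Sum>i<n. coeff c i)"
  by (simp add: sig_def poly_sum poly_monom)

lemma odd_like_prod:
  fixes c :: "'a::field poly"
  assumes "0 < n" "degree c < n" "odd_like n c"
  shows "odd_like n ((c * sig \<mu> n c) mod (monom 1 n - 1))"
proof -
  let ?c' = "(c * sig \<mu> n c) mod (monom 1 n - 1)"
  have "(\<Sum>i<n. coeff ?c' i) = poly ?c' 1" by (rule sum_coeff_poly1[OF deg_mod_M[OF assms(1)]])
  also have "\<dots> = poly c 1 * poly (sig \<mu> n c) 1" by (simp add: poly_mod_M)
  also have "\<dots> = (\<Sum>i<n. coeff c i) * (\<Sum>i<n. coeff c i)"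
    by (simp add: poly_sig1 sum_coeff_poly1[OF assms(2)])
  finally show ?thesis using assms(3) by (simp add: odd_like_def)
qed

lemma in_code: "H dvd P \<Longrightarrow> P mod (monom 1 n - 1) \<in> cyclic_code n H"
  by (auto simp: cyclic_code_def elim!: dvdE)

lemma weights_finite:
  fixes C :: "'a::field poly set"
  assumes "0 < n" "C = cyclic_code n G"
  shows "finite (hamming_weight ` {c\<in>C. odd_like n c})"
proof -
  have "hamming_weight ` {c\<in>C. odd_like n c} \<subseteq> {..n}"
  proof
    fix x assume "x \<in> hamming_weight ` {c\<in>C. odd_like n c}"
    then obtain c where "c \<in> C" "x = hamming_weight c" by auto
    moreover have "supp c \<subseteq> {..<n}"
    proof -
      have "degree c < n" using code_deg[OF assms(1)] \<open>c \<in> C\<close> assms(2) by blast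
      thus ?thesis by (auto simp: supp_def dest!: le_degree)
    qed
    hence "card (supp c) \<le> n" using card_mono[of "{..<n}" "supp c"] by simp
    ultimately show "x \<in> {..n}" by (simp add: hw_supp)
  qed
  thus ?thesis by (rule finite_subset) simp
qed


lemma dlog_exists:
  fixes p g x :: nat
  assumes "prime p" "residue_primroot p g" "\<not> p dvd x"
  shows "\<exists>a. [x = g ^ a] (mod p)"
proof -
  have p1: "p > 1" using assms(1) prime_gt_1_nat by blast
  have "coprime x p" using assms(1,3) by (metis coprime_commute prime_imp_coprime)
  hence "x mod p \<in> totatives p"
    using p1 assms(3) by (auto simp: in_totatives_iff mod_greater_zero_iff_not_dvd)
  then obtain a where "g ^ a mod p = x mod p"
    using residue_primroot_is_generator[OF p1 assms(2)] unfolding bij_betw_def by force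
  thus ?thesis unfolding cong_def by (intro exI[of _ a]) simp
qed

lemma pr_coprime: "residue_primroot p g \<Longrightarrow> coprime p g"
  by (simp add: residue_primroot_def)

lemma not_dvd_pow:
  fixes p g :: nat
  assumes "prime p" "residue_primroot p g" "[x = g ^ a] (mod p)"
  shows "\<not> p dvd x"
proof
  assume "p dvd x"
  hence "p dvd g ^ a" using assms(3) by (metis cong_dvd_iff)
  hence "p dvd g" using assms(1) prime_dvd_power by blast
  moreover have "coprime p g" using pr_coprime[OF assms(2)] .
  ultimately show False using assms(1) by (metis coprime_absorb_left not_prime_unit)
qed

lemma QR_iff_even:
  fixes p g x a :: nat
  assumes "prime p" "odd p" "residue_primroot p g" "[x = g ^ a] (mod p)"
  shows "QuadRes (int p) (int x) \<longleftrightarrow> even a"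
proof
  assume "even a"
  then obtain c where c: "a = 2 * c" by (elim evenE)
  have "[(g ^ c) ^ 2 = x] (mod p)" using assms(4) c by (simp add: power_mult cong_sym mult.commute)
  hence "[int (g ^ c) ^ 2 = int x] (mod int p)" by (metis cong_int_iff of_nat_power)
  thus "QuadRes (int p) (int x)" by (auto simp: QuadRes_def)
next
  assume "QuadRes (int p) (int x)"
  then obtain y :: int where y: "[y ^ 2 = int x] (mod int p)" by (auto simp: QuadRes_def)
  define z where "z = nat (y mod int p)"
  have p0: "int p > 0" using assms(1) prime_gt_0_nat by simp
  have zi: "int z = y mod int p" using p0 by (simp add: z_def)
  have "[int z = y] (mod int p)" by (simp add: zi cong_def)
  hence "[int z ^ 2 = y ^ 2] (mod int p)" by (rule cong_pow)
  hence "[int (z ^ 2) = int x] (mod int p)" using y by (metis cong_trans of_nat_power)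
  hence zx: "[z ^ 2 = x] (mod p)" by (simp only: cong_int_iff)
  have "\<not> p dvd x" by (rule not_dvd_pow[OF assms(1,3,4)])
  hence "\<not> p dvd z ^ 2" using zx by (metis cong_dvd_iff)
  hence "\<not> p dvd z" by (metis dvd_power dvd_trans zero_less_numeral)
  then obtain b where b: "[z = g ^ b] (mod p)" using dlog_exists[OF assms(1,3)] by blast
  have "[g ^ (2 * b) = g ^ a] (mod p)"
  proof -
    have "[(g ^ b) ^ 2 = z ^ 2] (mod p)" using b by (intro cong_pow) (rule cong_sym)
    hence "[g ^ (2*b) = z ^ 2] (mod p)" by (simp add: power_mult mult.commute)
    thus ?thesis using zx assms(4) by (metis cong_trans)
  qed
  hence "[2 * b = a] (mod ord p g)" using order_divides_expdiff[OF pr_coprime[OF assms(3)]] by blast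
  moreover have "ord p g = p - 1" using assms(1,3) by (simp add: residue_primroot_def totient_prime)
  moreover have "2 dvd p - 1" using assms(2) by simp
  ultimately have "[2 * b = a] (mod 2)" by (metis cong_dvd_modulus_nat)
  thus "even a" by (simp add: cong_def) presburger
qed


lemma U0_mem:
  fixes n1 n2 g1 g2 g \<nu> u a b :: nat
  assumes "prime n1" "prime n2" "odd n1" "odd n2" "n1 \<noteq> n2"
    and "residue_primroot n1 g1" "residue_primroot n2 g2"
    and "[g = g1] (mod n1)" "[g = g2] (mod n2)" "[\<nu> = g] (mod n1)" "[\<nu> = 1] (mod n2)"
    and "u < n1 * n2" "[u = g1 ^ a] (mod n1)" "[u = g2 ^ b] (mod n2)" "even (a + b)"
  shows "u \<in> U_set 0 (n1 * n2) ((n1 - 1) * (n2 - 1) div gcd (n1 - 1) (n2 - 1)) (gcd (n1 - 1) (n2 - 1)) g \<nu>"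
proof -
  define A where "A = n1 - 1"
  define B where "B = n2 - 1"
  define d where "d = gcd A B"
  define e where "e = A * B div d"
  have n1g: "n1 > 2" using assms(1,3) prime_ge_2_nat[OF assms(1)] by (metis le_neq_implies_less even_numeral)
  have n2g: "n2 > 2" using assms(2,4) prime_ge_2_nat[OF assms(2)] by (metis le_neq_implies_less even_numeral)
  have A2: "even A" "A > 0" using assms(3) n1g by (auto simp: A_def)
  have B2: "even B" "B > 0" using assms(4) n2g by (auto simp: B_def)
  have d2: "even d" using A2 B2 by (simp add: d_def)
  have dpos: "d > 0" using A2 by (simp add: d_def)
  have dA: "d dvd A" "d dvd B" by (simp_all add: d_def)
  have eA: "e = A * (B div d)" using dA by (simp add: e_def div_mult_swap)
  have eB: "e = B * (A div d)" using dA by (simp add: e_def div_mult_swap mult.commute)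
  have "B div d \<noteq> 0" using dA(2) B2(2) dpos by (simp add: dvd_div_eq_0_iff)
  hence epos: "e > 0" using eA A2(2) by simp
  define i where "i = (a + b * (d - 1)) mod d"
  have iltd: "i < d" using dpos by (simp add: i_def)
  have ieven: "even i"
  proof -
    have "odd (d - 1)" using d2 dpos by simp
    hence "even (b * (d - 1)) \<longleftrightarrow> even b" by simp
    hence "even (a + b * (d - 1))" using assms(15) by auto
    thus ?thesis using d2 by (simp add: i_def dvd_mod)
  qed
  have ib: "[i + b = a] (mod d)"
  proof -
    have "[i + b = a + b * (d - 1) + b] (mod d)" by (simp add: i_def cong_def mod_add_left_eq)
    moreover have "a + b * (d - 1) + b = a + d * b" using dpos by (cases d) (auto simp: algebra_simps)
    moreover have "[a + d * b = a] (mod d)" by (simp add: cong_def)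
    ultimately show ?thesis by (metis cong_trans)
  qed
  hence "[int (i + b) = int a] (mod int d)" by (simp only: cong_int_iff)
  hence "int d dvd int (i + b) - int a" by (simp only: cong_iff_dvd_diff)
  then obtain T0 where "int (i + b) - int a = int d * T0" by (elim dvdE)
  hence T: "int a - int i - int b = int d * (- T0)" by simp
  define T where "T = - T0"
  note T = T[folded T_def]
  obtain x y :: int where xy: "x * int A + y * int B = int d"
    using bezout_int[of "int A" "int B"] by (auto simp: d_def)
  define s0 where "s0 = int b + int B * y * T"
  define s where "s = nat (s0 mod int e)"
  have si: "int s = s0 mod int e" using epos by (simp add: s_def)
  have "int s < int e" using si epos by simp
  hence sle: "s < e" by simp
  have se: "[int s = s0] (mod int e)" by (simp add: si cong_def)
  have "int A dvd int e" using eA by simp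
  hence "[int s = s0] (mod int A)" using se cong_dvd_modulus by blast
  moreover have "s0 + int i = int a - x * int A * T"
  proof -
    have "int B * y = int d - x * int A" using xy by (simp add: algebra_simps)
    hence "s0 = int b + (int d - x * int A) * T" by (simp add: s0_def)
    thus ?thesis using T by (simp add: algebra_simps)
  qed
  ultimately have "[int s + int i = int a - x * int A * T] (mod int A)"
    using cong_add[OF _ cong_refl[of "int i"]] by metis
  moreover have "[int a - x * int A * T = int a] (mod int A)" by (simp add: cong_iff_dvd_diff)
  ultimately have "[int (s + i) = int a] (mod int A)" by (metis cong_trans of_nat_add)
  hence sia: "[s + i = a] (mod A)" by (simp only: cong_int_iff)
  have "int B dvd int e" using eB by simp
  hence "[int s = s0] (mod int B)" using se cong_dvd_modulus by blast
  moreover have "[s0 = int b] (mod int B)" by (simp add: s0_def cong_iff_dvd_diff)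
  ultimately have "[int s = int b] (mod int B)" by (metis cong_trans)
  hence sb: "[s = b] (mod B)" by (simp only: cong_int_iff)
  have c1: "[g ^ s * \<nu> ^ i = u] (mod n1)"
  proof -
    have "[\<nu> = g1] (mod n1)" using assms(10,8) by (rule cong_trans)
    hence "[g ^ s * \<nu> ^ i = g1 ^ s * g1 ^ i] (mod n1)"
      using assms(8) by (intro cong_mult cong_pow)
    moreover have "[g1 ^ (s + i) = g1 ^ a] (mod n1)"
      using order_divides_expdiff[OF pr_coprime[OF assms(6)]] sia assms(1,6)
      by (simp add: residue_primroot_def totient_prime A_def)
    ultimately have "[g ^ s * \<nu> ^ i = g1 ^ a] (mod n1)" by (simp add: power_add cong_trans)
    thus ?thesis using assms(13) cong_sym cong_trans by blast
  qed
  have c2: "[g ^ s * \<nu> ^ i = u] (mod n2)"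
  proof -
    have "[g ^ s * \<nu> ^ i = g2 ^ s * 1 ^ i] (mod n2)"
      using assms(9,11) by (intro cong_mult cong_pow)
    moreover have "[g2 ^ s = g2 ^ b] (mod n2)"
      using order_divides_expdiff[OF pr_coprime[OF assms(7)]] sb assms(2,7)
      by (simp add: residue_primroot_def totient_prime B_def)
    ultimately have "[g ^ s * \<nu> ^ i = g2 ^ b] (mod n2)" by (simp add: cong_trans)
    thus ?thesis using assms(14) cong_sym cong_trans by blast
  qed
  have "coprime n1 n2" using assms(1,2,5) by (simp add: primes_coprime)
  hence "[g ^ s * \<nu> ^ i = u] (mod n1 * n2)" using c1 c2 coprime_cong_mult_nat by blast
  hence "u = (g ^ s * \<nu> ^ i) mod (n1 * n2)" using assms(12) by (simp add: cong_def)
  hence "\<exists>s' i'. u = (g ^ s' * \<nu> ^ i') mod (n1 * n2) \<and> s' < e \<and> i' < d \<and> i' mod 2 = 0"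
  proof -
    have "i mod 2 = 0" using ieven by presburger
    thus ?thesis using sle iltd \<open>u = (g ^ s * \<nu> ^ i) mod (n1 * n2)\<close>
      by (intro exI[where x=s] exI[where x=i]) simp
  qed
  thus ?thesis unfolding U_set_def A_def[symmetric] B_def[symmetric] d_def[symmetric] e_def[symmetric]
    by blast
qed


definition Zset :: "nat set \<Rightarrow> nat \<Rightarrow> nat \<Rightarrow> nat set" where
  "Zset U0 p r = U0 \<union> (\<lambda>j. r*j) ` QR_set p \<union> (\<lambda>j. p*j) ` QR_set r"

lemma QR_or_QNR: "0 < j \<Longrightarrow> j < q \<Longrightarrow> j \<in> QR_set q \<or> j \<in> QNR_set q"
  by (auto simp: QR_set_def QNR_set_def)

lemma mod_cong_factor: "p dvd n \<Longrightarrow> [x mod n = x] (mod p)"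
  for x p n :: nat by (simp add: cong_def mod_mod_cancel)

lemma nt_cover:
  fixes p r gp gr \<mu> n k :: nat and U0 :: "nat set"
  assumes "prime p" "prime r" "odd p" "odd r" "p \<noteq> r"
    and "residue_primroot p gp" "residue_primroot r gr"
    and "[\<mu> = gp] (mod p)" "[\<mu> = 1] (mod r)" "n = p * r"
    and Uok: "\<And>u a b. u < n \<Longrightarrow> [u = gp ^ a] (mod p) \<Longrightarrow> [u = gr ^ b] (mod r) \<Longrightarrow> even (a + b) \<Longrightarrow> u \<in> U0"
    and "0 < k" "k < n" "k \<notin> (\<lambda>j. p*j) ` QNR_set r"
  shows "k \<in> Zset U0 p r \<or> \<mu> * k mod n \<in> Zset U0 p r"
proof -
  have p0: "p > 0" "r > 0" using assms(1,2) prime_gt_0_nat by auto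
  show ?thesis
  proof (cases "p dvd k")
    case True
    then obtain j where j: "k = p * j" by (elim dvdE)
    have "0 < j" "j < r" using j assms(10,12,13) by auto
    hence "j \<in> QR_set r" using QR_or_QNR[of j r] j assms(14) by auto
    thus ?thesis using j by (auto simp: Zset_def)
  next
    case np: False
    show ?thesis
    proof (cases "r dvd k")
      case True
      then obtain j where j: "k = r * j" by (elim dvdE)
      have j0: "0 < j" "j < p" using j assms(10,12,13) by auto
      show ?thesis
      proof (cases "j \<in> QR_set p")
        case True
        thus ?thesis using j by (auto simp: Zset_def)
      next
        case False
        hence nqr: "\<not> QuadRes (int p) (int j)" using j0 by (auto simp: QR_set_def)
        have "\<not> p dvd j" using j0 by (auto dest: dvd_imp_le)
        then obtain b where b: "[j = gp ^ b] (mod p)" using dlog_exists[OF assms(1,6)] by blast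
        have ob: "odd b" using nqr QR_iff_even[OF assms(1,3,6) b] by simp
        define j' where "j' = \<mu> * j mod p"
        have "[\<mu> * j = gp * gp ^ b] (mod p)" using assms(8) b by (rule cong_mult)
        hence jc: "[j' = gp ^ Suc b] (mod p)" by (simp add: j'_def)
        have "QuadRes (int p) (int j')" using QR_iff_even[OF assms(1,3,6) jc] ob by simp
        moreover have "\<not> p dvd j'" by (rule not_dvd_pow[OF assms(1,6) jc])
        hence "0 < j'" by (auto intro: Nat.gr0I)
        moreover have "j' < p" using p0 by (simp add: j'_def)
        ultimately have "j' \<in> QR_set p" by (simp add: QR_set_def)
        moreover have "\<mu> * k mod n = r * j'"
          using j assms(10) by (simp add: j'_def mult.commute mult.left_commute mod_mult_mult1)
        ultimately show ?thesis by (auto simp: Zset_def)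
      qed
    next
      case nr: False
      obtain a where a: "[k = gp ^ a] (mod p)" using dlog_exists[OF assms(1,6) np] by blast
      obtain b where b: "[k = gr ^ b] (mod r)" using dlog_exists[OF assms(2,7) nr] by blast
      show ?thesis
      proof (cases "even (a + b)")
        case True
        thus ?thesis using Uok[OF assms(13) a b] by (simp add: Zset_def)
      next
        case False
        define m where "m = \<mu> * k mod n"
        have mn: "m < n" using assms(13) by (simp add: m_def)
        have "[m = \<mu> * k] (mod p)" unfolding m_def by (rule mod_cong_factor) (simp add: assms(10))
        moreover have "[\<mu> * k = gp * gp ^ a] (mod p)" using assms(8) a by (rule cong_mult)
        ultimately have m1: "[m = gp ^ Suc a] (mod p)" by (simp add: cong_trans)
        have "[m = \<mu> * k] (mod r)" unfolding m_def by (rule mod_cong_factor) (simp add: assms(10))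
        moreover have "[\<mu> * k = 1 * gr ^ b] (mod r)" using assms(9) b by (rule cong_mult)
        ultimately have m2: "[m = gr ^ b] (mod r)" by (simp add: cong_trans)
        have "even (Suc a + b)" using False by simp
        thus ?thesis using Uok[OF mn m1 m2] by (simp add: Zset_def m_def)
      qed
    qed
  qed
qed

lemma U_pos:
  fixes n1 n2 g1 g \<nu> :: nat
  assumes "prime n1" "prime n2" "residue_primroot n1 g1" "[g = g1] (mod n1)" "[\<nu> = g] (mod n1)"
    and "x \<in> U_set r (n1 * n2) e d g \<nu>"
  shows "0 < x \<and> x < n1 * n2"
proof -
  obtain s i where x: "x = (g ^ s * \<nu> ^ i) mod (n1 * n2)" using assms(6) by (auto simp: U_set_def)
  have nz: "n1 * n2 > 0" using assms(1,2) prime_gt_0_nat by simp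
  have "[\<nu> = g1] (mod n1)" using assms(5,4) by (rule cong_trans)
  hence "[g ^ s * \<nu> ^ i = g1 ^ (s + i)] (mod n1)" using assms(4)
    by (simp add: power_add cong_mult cong_pow)
  hence "\<not> n1 dvd g ^ s * \<nu> ^ i" using not_dvd_pow[OF assms(1,3)] by blast
  hence "\<not> n1 * n2 dvd g ^ s * \<nu> ^ i" by (meson dvd_mult_left)
  hence "x \<noteq> 0" using x by (simp add: mod_eq_0_iff_dvd)
  thus ?thesis using x nz by simp
qed


lemma pow_mod_gen: "t ^ n = 1 \<Longrightarrow> t ^ (x mod n) = (t::'b::comm_ring_1) ^ x"
proof -
  assume tn: "t ^ n = 1"
  have "t ^ x = t ^ (n * (x div n) + x mod n)" by (simp only: mult_div_mod_eq)
  also have "\<dots> = t ^ (x mod n)" by (simp only: power_add power_mult tn power_one mult_1_left)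
  finally show ?thesis by simp
qed

context fhom
begin

lemma mpM: "map_poly \<phi> (monom 1 n - 1) = monom 1 n - 1"
  by (simp add: mp_diff mp_monom mp_one hone)

lemma c_root:
  assumes "c \<in> cyclic_code n G" "t ^ n = 1" "poly (map_poly \<phi> G) t = 0"
  shows "poly (map_poly \<phi> c) t = 0"
proof -
  obtain a where c: "c = (G * a) mod (monom 1 n - 1)" using assms(1) by (auto simp: cyclic_code_def)
  let ?M = "monom 1 n - 1 :: 'a poly"
  have "c = G * a - (G * a div ?M) * ?M" using c by (simp add: minus_div_mult_eq_mod)
  hence "map_poly \<phi> c = map_poly \<phi> G * map_poly \<phi> a - map_poly \<phi> (G * a div ?M) * (monom 1 n - 1)"
    by (simp add: mp_diff mp_mult mp_monom mp_one hone)
  thus ?thesis using assms(2,3) by (simp add: poly_monom)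
qed

lemma sig_eval:
  assumes "degree c < n" "t ^ n = 1"
  shows "poly (map_poly \<phi> (sig \<mu> n c)) t = poly (map_poly \<phi> c) (t ^ \<mu>)"
proof -
  have "poly (map_poly \<phi> (sig \<mu> n c)) t = (\<Sum>i<n. \<phi> (coeff c i) * t ^ (\<mu> * i mod n))"
    by (simp add: sig_def mp_sum mp_monom poly_sum poly_monom)
  also have "\<dots> = (\<Sum>i<n. \<phi> (coeff c i) * (t ^ \<mu>) ^ i)"
    by (simp add: pow_mod_gen[OF assms(2)] power_mult)
  also have "\<dots> = poly (map_poly \<phi> c) (t ^ \<mu>)"
    using poly_sum_lt[of "map_poly \<phi> c" n "t ^ \<mu>"] assms(1) by (simp add: mp_degree)
  finally show ?thesis .
qed

lemma H_dvd:
  fixes \<theta> :: 'b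
  assumes "rootn \<theta> n" "c \<in> cyclic_code n G"
    and ZG: "\<And>k. k \<in> Z \<Longrightarrow> poly (map_poly \<phi> G) (\<theta> ^ k) = 0"
    and mpH: "map_poly \<phi> H = (\<Prod>k\<in>K. [:-(\<theta>^k),1:])" and "K \<subseteq> {..<n}"
    and cover: "\<And>k. k \<in> K \<Longrightarrow> k \<in> Z \<or> \<mu> * k mod n \<in> Z"
  shows "H dvd c * sig \<mu> n c"
proof -
  interpret rootn \<theta> n by fact
  have degc: "degree c < n" using code_deg[OF npos assms(2)] .
  have tn: "(\<theta> ^ k) ^ n = 1" for k by (metis mult.commute power_mult power_one thn)
  have "(\<Prod>k\<in>K. [:-(\<theta>^k),1:]) dvd map_poly \<phi> (c * sig \<mu> n c)"
  proof (rule prod_dvd[OF assms(5)])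
    fix k assume "k \<in> K"
    have ev: "poly (map_poly \<phi> (c * sig \<mu> n c)) (\<theta> ^ k)
        = poly (map_poly \<phi> c) (\<theta> ^ k) * poly (map_poly \<phi> c) (\<theta> ^ (\<mu> * k mod n))"
    proof -
      have e1: "\<theta> ^ (\<mu> * k mod n) = (\<theta> ^ k) ^ \<mu>" by (metis pow_mod power_mult mult.commute)
      show ?thesis by (simp add: mp_mult sig_eval[OF degc tn] e1)
    qed
    from cover[OF \<open>k \<in> K\<close>] show "poly (map_poly \<phi> (c * sig \<mu> n c)) (\<theta> ^ k) = 0"
    proof
      assume "k \<in> Z"
      thus ?thesis using ev c_root[OF assms(2) tn ZG] by simp
    next
      assume "\<mu> * k mod n \<in> Z"
      thus ?thesis using ev c_root[OF assms(2) tn ZG] by simp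
    qed
  qed
  thus ?thesis using mpH descent by simp
qed

lemma omega_le:
  fixes \<theta> :: 'b
  assumes "rootn \<theta> n" "c0 \<in> cyclic_code n G" "odd_like n c0"
    and ZG: "\<And>k. k \<in> Z \<Longrightarrow> poly (map_poly \<phi> G) (\<theta> ^ k) = 0"
    and mpH: "map_poly \<phi> H = (\<Prod>k\<in>K. [:-(\<theta>^k),1:])" and "K \<subseteq> {..<n}"
    and cover: "\<And>k. k \<in> K \<Longrightarrow> k \<in> Z \<or> \<mu> * k mod n \<in> Z"
  shows "min_odd_like_weight n (cyclic_code n H) \<le> hamming_weight c0 * hamming_weight c0"
proof -
  interpret rootn \<theta> n by fact
  let ?c = "(c0 * sig \<mu> n c0) mod (monom 1 n - 1)"
  have "H dvd c0 * sig \<mu> n c0" by (rule H_dvd[OF assms(1,2) ZG mpH assms(6) cover])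
  hence inC: "?c \<in> cyclic_code n H" by (rule in_code)
  have ol: "odd_like n ?c" by (rule odd_like_prod[OF npos code_deg[OF npos assms(2)] assms(3)])
  have "min_odd_like_weight n (cyclic_code n H) \<le> hamming_weight ?c"
    unfolding min_odd_like_weight_def
    by (rule Min_le[OF weights_finite[OF npos refl]]) (use inC ol in auto)
  also have "\<dots> \<le> hamming_weight c0 * hamming_weight c0" by (rule weight_bound[OF npos])
  finally show ?thesis .
qed

end


lemma root_poly_zero:
  "finite S \<Longrightarrow> j \<in> S \<Longrightarrow> poly (root_poly t S) (t ^ j) = 0"
  by (simp add: root_poly_def poly_prod) (rule prod_zero, auto)

lemma root_poly_one_nz:
  fixes t :: "'b::field"
  shows "finite S \<Longrightarrow> (\<And>j. j \<in> S \<Longrightarrow> t ^ j \<noteq> 1) \<Longrightarrow> poly (root_poly t S) 1 \<noteq> 0"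
  by (auto simp: root_poly_def poly_prod)

lemma QR_sub: "QR_set p \<subseteq> {0<..<p}" and QNR_sub: "QNR_set p \<subseteq> {0<..<p}"
  by (auto simp: QR_set_def QNR_set_def)

lemma QR_fin: "finite (QR_set p)" and QNR_fin: "finite (QNR_set p)"
  using QR_sub QNR_sub finite_subset by (metis finite_greaterThanLessThan)+

theorem mainTheorem3:
  fixes n1 n2 q g1 g2 g \<nu> :: nat
    and \<phi> :: "'a::{finite,field} \<Rightarrow> 'b::{finite,field}"
    and \<theta> :: 'b
    and G000 H1 H2 :: "'a poly"
  defines "n \<equiv> n1 * n2"
  defines "d \<equiv> gcd (n1 - 1) (n2 - 1)"
  defines "e \<equiv> (n1 - 1) * (n2 - 1) div d"
  defines "N \<equiv> ord n q"
  defines "U0 \<equiv> U_set 0 n e d g \<nu>"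
  assumes "prime n1" and "prime n2" and "odd n1" and "odd n2" and "n1 \<noteq> n2"
    and "CARD('a) = q" and "coprime q n"
    \<comment> \<open>GF(q^N) and an embedding of GF(q) into it\<close>
    and "CARD('b) = q ^ N"
    and "\<And>x y. \<phi> (x + y) = \<phi> x + \<phi> y" and "\<And>x y. \<phi> (x * y) = \<phi> x * \<phi> y" and "\<phi> 1 = 1"
    \<comment> \<open>primitive n-th root of unity\<close>
    and "\<theta> ^ n = 1" and "\<And>k. 0 < k \<Longrightarrow> k < n \<Longrightarrow> \<theta> ^ k \<noteq> 1"
    \<comment> \<open>primitive roots and the elements g, nu\<close>
    and "residue_primroot n1 g1" and "residue_primroot n2 g2"
    and "[g = g1] (mod n1)" and "[g = g2] (mod n2)"
    and "[\<nu> = g] (mod n1)" and "[\<nu> = 1] (mod n2)"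
    \<comment> \<open>hypotheses of the theorem\<close>
    and "q mod n \<in> U0"
    and "QuadRes (int n1) (int q)" and "QuadRes (int n2) (int q)"
    \<comment> \<open>the generator polynomials, which lie in GF(q)[x]\<close>
    and "map_poly \<phi> G000 = root_poly \<theta> U0 * root_poly (\<theta> ^ n2) (QR_set n1)
                                          * root_poly (\<theta> ^ n1) (QR_set n2)"
    and "map_poly \<phi> H1 = (Polynomial.monom 1 n - 1) div ([:-1, 1:] * root_poly (\<theta> ^ n2) (QNR_set n1))"
    and "map_poly \<phi> H2 = (Polynomial.monom 1 n - 1) div ([:-1, 1:] * root_poly (\<theta> ^ n1) (QNR_set n2))"
  shows "real (min_odd_like_weight n (cyclic_code n G000))
           \<ge> sqrt (real (max (min_odd_like_weight n (cyclic_code n H1))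
                             (min_odd_like_weight n (cyclic_code n H2))))"
proof -
  interpret fhom \<phi> by unfold_locales fact+
  have np: "0 < n" using \<open>prime n1\<close> \<open>prime n2\<close> prime_gt_0_nat by (simp add: n_def)
  interpret rootn \<theta> n by unfold_locales (use np \<open>\<theta> ^ n = 1\<close> \<open>\<And>k. 0 < k \<Longrightarrow> k < n \<Longrightarrow> \<theta> ^ k \<noteq> 1\<close> in auto)
  have n1p: "0 < n1" "0 < n2" using \<open>prime n1\<close> \<open>prime n2\<close> prime_gt_0_nat by auto
  have Upos: "\<And>x. x \<in> U0 \<Longrightarrow> 0 < x \<and> x < n"
    using U_pos[OF \<open>prime n1\<close> \<open>prime n2\<close> \<open>residue_primroot n1 g1\<close> \<open>[g = g1] (mod n1)\<close> \<open>[\<nu> = g] (mod n1)\<close>]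
    unfolding U0_def n_def by blast
  have Ufin: "finite U0" using Upos by (metis finite_lessThan finite_subset lessThan_iff subsetI)
  define Z where "Z = Zset U0 n2 n1"
  have ZG: "poly (map_poly \<phi> G000) (\<theta> ^ k) = 0" if "k \<in> Z" for k
  proof -
    have "k \<in> U0 \<or> k \<in> (\<lambda>j. n1*j) ` QR_set n2 \<or> k \<in> (\<lambda>j. n2*j) ` QR_set n1"
      using that by (auto simp: Z_def Zset_def)
    thus ?thesis
    proof (elim disjE)
      assume "k \<in> U0" thus ?thesis using \<open>map_poly \<phi> G000 = _\<close> Ufin by (simp add: root_poly_zero)
    next
      assume "k \<in> (\<lambda>j. n1*j) ` QR_set n2"
      then obtain j where "j \<in> QR_set n2" "k = n1 * j" by auto
      thus ?thesis using \<open>map_poly \<phi> G000 = _\<close> QR_fin by (simp add: root_poly_zero power_mult)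
    next
      assume "k \<in> (\<lambda>j. n2*j) ` QR_set n1"
      then obtain j where "j \<in> QR_set n1" "k = n2 * j" by auto
      thus ?thesis using \<open>map_poly \<phi> G000 = _\<close> QR_fin by (simp add: root_poly_zero power_mult)
    qed
  qed
  have pr: "\<theta> ^ k \<noteq> 1" if "0 < k" "k < n" for k using prim that .
  define c1 where "c1 = G000 mod (monom 1 n - 1)"
  have c1C: "c1 \<in> cyclic_code n G000" unfolding c1_def cyclic_code_def by (auto intro: exI[of _ 1])
  have "poly (map_poly \<phi> G000) 1 \<noteq> 0"
  proof -
    have a: "poly (root_poly \<theta> U0) 1 \<noteq> 0" using Ufin Upos pr by (intro root_poly_one_nz) auto
    have b: "poly (root_poly (\<theta> ^ n2) (QR_set n1)) 1 \<noteq> 0"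
    proof (intro root_poly_one_nz QR_fin)
      fix j assume "j \<in> QR_set n1"
      hence "0 < j" "j < n1" by (auto simp: QR_set_def)
      thus "(\<theta> ^ n2) ^ j \<noteq> 1" using pr[of "n2 * j"] n1p by (simp add: power_mult n_def)
    qed
    have c: "poly (root_poly (\<theta> ^ n1) (QR_set n2)) 1 \<noteq> 0"
    proof (intro root_poly_one_nz QR_fin)
      fix j assume "j \<in> QR_set n2"
      hence "0 < j" "j < n2" by (auto simp: QR_set_def)
      thus "(\<theta> ^ n1) ^ j \<noteq> 1" using pr[of "n1 * j"] n1p by (simp add: power_mult n_def)
    qed
    show ?thesis using a b c \<open>map_poly \<phi> G000 = _\<close> by simp
  qed
  hence "poly G000 1 \<noteq> 0" using poly_mp[of G000 1] hone by auto
  hence "odd_like n c1"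
    unfolding odd_like_def c1_def
    by (simp add: sum_coeff_poly1[OF deg_mod_M[OF np]] poly_mod_M)
  hence ne: "hamming_weight c1 \<in> hamming_weight ` {c \<in> cyclic_code n G000. odd_like n c}"
    using c1C by auto
  define w where "w = min_odd_like_weight n (cyclic_code n G000)"
  have "w \<in> hamming_weight ` {c \<in> cyclic_code n G000. odd_like n c}"
    unfolding w_def min_odd_like_weight_def
    by (rule Min_in[OF weights_finite[OF np refl]]) (use ne in auto)
  then obtain c0 where c0: "c0 \<in> cyclic_code n G000" "odd_like n c0" "w = hamming_weight c0" by auto
  have Uok: "u \<in> U0" if "u < n" "[u = g1 ^ a] (mod n1)" "[u = g2 ^ b] (mod n2)" "even (a + b)" for u a b
    using U0_mem[OF \<open>prime n1\<close> \<open>prime n2\<close> \<open>odd n1\<close> \<open>odd n2\<close> \<open>n1 \<noteq> n2\<close>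
       \<open>residue_primroot n1 g1\<close> \<open>residue_primroot n2 g2\<close> \<open>[g = g1] (mod n1)\<close> \<open>[g = g2] (mod n2)\<close>
       \<open>[\<nu> = g] (mod n1)\<close> \<open>[\<nu> = 1] (mod n2)\<close>] that
    unfolding U0_def n_def d_def e_def by (simp add: n_def)
  have cop: "coprime n2 n1" using \<open>prime n1\<close> \<open>prime n2\<close> \<open>n1 \<noteq> n2\<close> by (simp add: primes_coprime)
  obtain \<mu>1 where \<mu>1: "[\<mu>1 = g2] (mod n2)" "[\<mu>1 = 1] (mod n1)"
    using binary_chinese_remainder_nat[OF cop] by blast
  define K1 where "K1 = {..<n} - insert 0 ((\<lambda>j. n2*j) ` QNR_set n1)"
  have mpH1: "map_poly \<phi> H1 = (\<Prod>k\<in>K1. [:-(\<theta>^k),1:])"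
    unfolding K1_def \<open>map_poly \<phi> H1 = _\<close>
    by (rule H_factor) (auto simp: n_def QNR_set_def)
  have w1: "min_odd_like_weight n (cyclic_code n H1) \<le> w * w"
    unfolding c0(3)
  proof (rule omega_le[OF _ c0(1,2) ZG mpH1])
    show "rootn \<theta> n" by unfold_locales
    show "K1 \<subseteq> {..<n}" by (auto simp: K1_def)
    fix k assume "k \<in> K1"
    hence k: "0 < k" "k < n" "k \<notin> (\<lambda>j. n2*j) ` QNR_set n1" by (auto simp: K1_def)
    show "k \<in> Z \<or> \<mu>1 * k mod n \<in> Z"
      unfolding Z_def
      by (rule nt_cover[OF \<open>prime n2\<close> \<open>prime n1\<close> \<open>odd n2\<close> \<open>odd n1\<close> _
            \<open>residue_primroot n2 g2\<close> \<open>residue_primroot n1 g1\<close> \<mu>1 _ _ k])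
         (use \<open>n1 \<noteq> n2\<close> Uok in \<open>auto simp: n_def mult.commute add.commute\<close>)
  qed
  have \<nu>1: "[\<nu> = g1] (mod n1)" using \<open>[\<nu> = g] (mod n1)\<close> \<open>[g = g1] (mod n1)\<close> by (rule cong_trans)
  define K2 where "K2 = {..<n} - insert 0 ((\<lambda>j. n1*j) ` QNR_set n2)"
  have mpH2: "map_poly \<phi> H2 = (\<Prod>k\<in>K2. [:-(\<theta>^k),1:])"
    unfolding K2_def \<open>map_poly \<phi> H2 = _\<close>
    by (rule H_factor) (auto simp: n_def QNR_set_def)
  have ZZ: "Zset U0 n1 n2 = Z" by (auto simp: Z_def Zset_def)
  have w2: "min_odd_like_weight n (cyclic_code n H2) \<le> w * w"
    unfolding c0(3)
  proof (rule omega_le[OF _ c0(1,2) ZG mpH2])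
    show "rootn \<theta> n" by unfold_locales
    show "K2 \<subseteq> {..<n}" by (auto simp: K2_def)
    fix k assume "k \<in> K2"
    hence k: "0 < k" "k < n" "k \<notin> (\<lambda>j. n1*j) ` QNR_set n2" by (auto simp: K2_def)
    show "k \<in> Z \<or> \<nu> * k mod n \<in> Z"
      unfolding ZZ[symmetric]
      by (rule nt_cover[OF \<open>prime n1\<close> \<open>prime n2\<close> \<open>odd n1\<close> \<open>odd n2\<close> \<open>n1 \<noteq> n2\<close>
            \<open>residue_primroot n1 g1\<close> \<open>residue_primroot n2 g2\<close> \<nu>1 \<open>[\<nu> = 1] (mod n2)\<close> _ _ k])
         (use Uok in \<open>auto simp: n_def\<close>)
  qed
  have "real (max (min_odd_like_weight n (cyclic_code n H1)) (min_odd_like_weight n (cyclic_code n H2)))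
        \<le> real w ^ 2"
    using w1 w2 by (simp add: power2_eq_square flip: of_nat_mult)
  hence "sqrt (real (max (min_odd_like_weight n (cyclic_code n H1)) (min_odd_like_weight n (cyclic_code n H2))))
        \<le> sqrt (real w ^ 2)" by (rule real_sqrt_le_mono)
  thus ?thesis by (simp add: w_def)
qed


end
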